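(* Let $N,n,m,p$ be positive integers, $A\in\mathbb{R}^{n\times n}$, $B\in\mathbb{R}^{n\times p}$, $C\in\mathbb{R}^{m\times n}$, $H\in\mathbb{R}^{n\times m}$, $W=[w_{ij}]\in\mathbb{R}^{N\times N}$ with $w_{ii}=0$ for all $i$, $\Delta=\mathrm{diag}(\delta_1,\dots,\delta_N)$ with $\delta_i\in\{0,1\}$, and $h>0$. Put $\mathcal{B}(h)=\int_0^h e^{A\tau}d\tau\,B$, $\mathcal{H}(h)=\int_0^h e^{A\tau}d\tau\,HC$, $\Phi_s=I_N\otimes e^{Ah}+W\otimes\mathcal{H}(h)$, $\Psi_s=\Delta\otimes\mathcal{B}(h)$. Assume $W$ is diagonalizable, let $v_1,\dots,v_N\in\mathbb{C}^{1\times N}$ be linearly independent row vectors with $v_kW=\lambda_kv_k$, and let $E_k=e^{Ah}+\lambda_k\mathcal{H}(h)$, $k=1,\dots,N$. Assume moreover that every $E_k$ is nonsingular. Then the networked sampled-data system $X(k+1)=\Phi_sX(k)+\Psi_sU(k)$ is controllable if and only if the following three conditions all hold: (1) the pair $(W,\Delta)$ is controllable; (2) the pair $(E_k,\mathcal{B}(h))$ is controllable for every $k=1,\dots,N$; (3) whenever $\theta\in\mathbb{C}$ is a common eigenvalue of $E_{k_1},\dots,E_{k_q}$ for distinct indices $k_1,\dots,k_q\in\{1,\dots,N\}$ with $1<q\le N$, then $(v_{k_1}\otimes\xi_{k_1}+\dots+v_{k_q}\otimes\xi_{k_q})(\Delta\otimes\mathcal{B}(h))\neq0$ for all $\xi_j\in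 M(\theta\,|\,E_j)$, $j=k_1,\dots,k_q$, with $(\xi_{k_1},\dots,\xi_{k_q})\neq0$.
   Context: The networked sampled-data system is the discrete-time system $X(k+1)=\Phi_sX(k)+\Psi_sU(k)$, $X(k)\in\mathbb{R}^{Nn}$, $U(k)\in\mathbb{R}^{Np}$; it is called controllable if every initial state can be steered to the origin in finitely many steps. For $F\in\mathbb{C}^{q\times q}$, $G\in\mathbb{C}^{q\times s}$, the pair $(F,G)$ is called controllable if $\mathrm{rank}[sI_q-F,\ G]=q$ for every $s\in\mathbb{C}$. $M(\theta\,|\,E)=\{\xi:\ \xi E=\theta\xi\}$ is the left eigenspace of the square matrix $E$ for $\theta$. $\otimes$ is the Kronecker product. *)

theory Defs
  imports "HOL-Analysis.Analysis"
begin

(* Matrices are HOL-Analysis matrices 'a^'cols^'rows; dimensions are finite types.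
   Row vectors of length k are vectors 'a^'k, and  x v* M  is row-vector times matrix. *)

primrec mpow :: "'a::semiring_1^'n^'n \<Rightarrow> nat \<Rightarrow> 'a^'n^'n" where
  "mpow A 0 = mat 1"
| "mpow A (Suc k) = A ** mpow A k"

definition mexp :: "real^'n^'n \<Rightarrow> real^'n^'n" where
  "mexp A = (\<Sum>k. (1 / fact k) *\<^sub>R mpow A k)"

definition kron :: "'a::times^'c1^'r1 \<Rightarrow> 'a^'c2^'r2 \<Rightarrow> 'a^('c1 \<times> 'c2)^('r1 \<times> 'r2)" where
  "kron A B = (\<chi> i j. A $ fst i $ fst j * B $ snd i $ snd j)"

definition kronv :: "'a::times^'k1 \<Rightarrow> 'a^'k2 \<Rightarrow> 'a^('k1 \<times> 'k2)" where
  "kronv x y = (\<chi> i. x $ fst i * y $ snd i)"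

definition cmat :: "real^'c^'r \<Rightarrow> complex^'c^'r" where
  "cmat M = (\<chi> i j. complex_of_real (M $ i $ j))"

definition pair_controllable :: "complex^'q^'q \<Rightarrow> complex^'s^'q \<Rightarrow> bool" where
  "pair_controllable F G \<longleftrightarrow>
     (\<forall>s::complex. rank ((\<chi> i j. case j of Inl a \<Rightarrow> (mat s - F) $ i $ a
                                         | Inr b \<Rightarrow> G $ i $ b) :: complex^('q + 's)^'q)
                    = CARD('q))"

definition left_eigenspace :: "complex \<Rightarrow> complex^'n^'n \<Rightarrow> (complex^'n) set" where
  "left_eigenspace \<theta> E = {\<xi>. \<xi> v* E = \<theta> *s \<xi>}"

primrec dtraj :: "real^'x^'x \<Rightarrow> real^'u^'x \<Rightarrow> real^'x \<Rightarrow> (nat \<Rightarrow> real^'u) \<Rightarrow> nat \<Rightarrow> real^'x" where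
  "dtraj Phi Psi X0 U 0 = X0"
| "dtraj Phi Psi X0 U (Suc k) = Phi *v dtraj Phi Psi X0 U k + Psi *v U k"

definition dt_controllable :: "real^'x^'x \<Rightarrow> real^'u^'x \<Rightarrow> bool" where
  "dt_controllable Phi Psi \<longleftrightarrow> (\<forall>X0. \<exists>K U. dtraj Phi Psi X0 U K = 0)"

end

theory Submission
  imports Defs "HOL-Computational_Algebra.Fundamental_Theorem_Algebra"
begin
lemma vm_rows: "(z::'a::field^'q) v* A = (\<Sum>i\<in>UNIV. z$i *s row i A)"
  by (simp add: vec_eq_iff vector_matrix_mult_def sum_component row_def)

lemma rank_full_iff:
  fixes A :: "'a::field^'c^'q"
  shows "rank A = CARD('q) \<longleftrightarrow> (\<forall>z. z v* A = 0 \<longrightarrow> z = 0)"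
proof
  let ?r = "\<lambda>i. row i A"
  have rowsr: "rows A = range ?r" by (auto simp: rows_def)
  assume H: "rank A = CARD('q)"
  have fin: "finite (rows A)" by (simp add: rowsr)
  have c1: "card (rows A) \<le> CARD('q)" unfolding rowsr by (rule card_image_le) simp
  have c2: "vec.dim (rows A) \<le> card (rows A)"
    by (rule vec.dim_le_card[OF vec.span_superset fin])
  from H have d: "vec.dim (rows A) = CARD('q)" by (simp add: row_rank_def_gen)
  with c1 c2 have cq: "card (rows A) = CARD('q)" by linarith
  hence inj: "inj ?r" unfolding rowsr by (simp add: inj_on_iff_eq_card)
  have ind: "vec.independent (rows A)"
    by (rule vec.card_le_dim_spanning[OF order.refl vec.span_superset fin]) (simp add: d cq)
  show "\<forall>z. z v* A = 0 \<longrightarrow> z = 0"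
  proof (intro allI impI)
    fix z assume z: "z v* A = 0"
    let ?c = "\<lambda>v. z $ (inv ?r v)"
    have "(\<Sum>v\<in>rows A. ?c v *s v) = (\<Sum>i\<in>UNIV. ?c (?r i) *s ?r i)"
      unfolding rowsr by (rule sum.reindex[OF inj, unfolded comp_def])
    also have "\<dots> = z v* A"
    proof -
      have "\<And>i. inv ?r (?r i) = i" using inv_f_f[OF inj] by simp
      then show ?thesis by (simp add: vm_rows)
    qed
    finally have "(\<Sum>v\<in>rows A. ?c v *s v) = 0" using z by simp
    moreover have "\<forall>c. (\<Sum>v\<in>rows A. c v *s v) = 0 \<longrightarrow> (\<forall>v\<in>rows A. c v = 0)"
      using ind unfolding vec.independent_explicit by blast
    ultimately have "\<forall>v\<in>rows A. ?c v = 0" by (elim allE[where x="?c"]) simp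
    hence "\<forall>i. ?c (?r i) = 0" by (simp add: rowsr)
    moreover have "\<And>i. inv ?r (?r i) = i" using inv_f_f[OF inj] by simp
    ultimately show "z = 0" by (simp add: vec_eq_iff)
  qed
next
  let ?r = "\<lambda>i. row i A"
  have rowsr: "rows A = range ?r" by (auto simp: rows_def)
  assume H: "\<forall>z. z v* A = 0 \<longrightarrow> z = 0"
  have inj: "inj ?r"
  proof (rule injI)
    fix i j assume e: "?r i = ?r j"
    show "i = j"
    proof (rule ccontr)
      assume ne: "i \<noteq> j"
      let ?z = "axis i (1::'a) - axis j 1"
      have "?z v* A = ?r i - ?r j"
        by (simp add: vec_eq_iff vector_matrix_mult_def axis_def row_def left_diff_distrib sum_subtractf if_distrib[of "\<lambda>x. x * _"] cong: if_cong)
      with e have "?z v* A = 0" by simp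
      with H have "?z = 0" by blast
      hence "?z $ i = 0" by simp
      with ne show False by (simp add: axis_def)
    qed
  qed
  have ind: "vec.independent (rows A)"
  proof (subst vec.independent_explicit, intro conjI allI impI ballI)
    show "finite (rows A)" by (simp add: rowsr)
    fix c v assume s: "(\<Sum>v\<in>rows A. c v *s v) = 0" and v: "v \<in> rows A"
    let ?z = "\<chi> i. c (?r i)"
    have "?z v* A = (\<Sum>i\<in>UNIV. c (?r i) *s ?r i)" by (simp add: vm_rows)
    also have "\<dots> = (\<Sum>v\<in>rows A. c v *s v)"
      unfolding rowsr by (rule sum.reindex[OF inj, unfolded comp_def, symmetric])
    finally have "?z = 0" using H s by simp
    then show "c v = 0" using v by (auto simp: rowsr vec_eq_iff)
  qed
  have "rank A = card (rows A)" by (simp add: row_rank_def_gen vec.dim_eq_card_independent[OF ind])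
  also have "\<dots> = CARD('q)" unfolding rowsr using inj by (simp add: card_image)
  finally show "rank A = CARD('q)" .
qed

lemma vm_add: "((a::'a::comm_semiring_1^'m) + b) v* M = a v* M + b v* M"
  by (simp add: vec_eq_iff vector_matrix_mult_def sum.distrib distrib_right)

lemma vm_smult: "((c::'a::comm_semiring_1) *s a) v* M = c *s (a v* M)"
  by (simp add: vec_eq_iff vector_matrix_mult_def sum_distrib_left mult.assoc)

lemma vm_sum: "(\<Sum>i\<in>A. f i) v* (M::'a::comm_semiring_1^'n^'m) = (\<Sum>i\<in>A. f i v* M)"
  by (simp add: vec_eq_iff vector_matrix_mult_def sum_component sum_distrib_right sum.swap[of _ A])

definition pe :: "complex poly \<Rightarrow> complex^'x^'x \<Rightarrow> complex^'x \<Rightarrow> complex^'x" where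
  "pe p M z = (\<Sum>i\<le>degree p. coeff p i *s ((\<lambda>w. w v* M)^^i) z)"

lemma pe_bound: "degree p \<le> n \<Longrightarrow> pe p M z = (\<Sum>i\<le>n. coeff p i *s ((\<lambda>w. w v* M)^^i) z)"
  unfolding pe_def
  by (rule sum.mono_neutral_left) (auto simp: coeff_eq_0)

lemma pe_add: "pe (p + q) M z = pe p M z + pe q M z"
proof -
  let ?n = "max (degree p) (degree q)"
  have "pe (p + q) M z = (\<Sum>i\<le>?n. coeff (p+q) i *s ((\<lambda>w. w v* M)^^i) z)"
    by (rule pe_bound) (simp add: degree_add_le)
  also have "\<dots> = pe p M z + pe q M z"
    by (simp add: pe_bound[of p ?n] pe_bound[of q ?n] vector_sadd_rdistrib sum.distrib)
  finally show ?thesis .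
qed

lemma pe_smult: "pe (smult c p) M z = c *s pe p M z"
proof -
  have "pe (smult c p) M z = (\<Sum>i\<le>degree p. coeff (smult c p) i *s ((\<lambda>w. w v* M)^^i) z)"
    by (rule pe_bound) simp
  also have "\<dots> = c *s pe p M z"
    by (simp add: pe_def vec.scale_sum_right)
  finally show ?thesis .
qed

lemma pe_pCons0: "pe (pCons 0 p) M z = pe p M z v* M"
proof -
  have "pe (pCons 0 p) M z = (\<Sum>i\<le>Suc (degree p). coeff (pCons 0 p) i *s ((\<lambda>w. w v* M)^^i) z)"
    by (rule pe_bound) (simp add: degree_pCons_le)
  also have "\<dots> = (\<Sum>i\<le>degree p. coeff p i *s ((\<lambda>w. w v* M)^^(Suc i)) z)"
    unfolding sum.atMost_Suc_shift by simp
  also have "\<dots> = pe p M z v* M"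
    by (simp add: pe_def vm_sum vm_smult funpow_swap1)
  finally show ?thesis .
qed

lemma pe_monom: "pe (monom c k) M z = c *s ((\<lambda>w. w v* M)^^k) z"
proof -
  have "pe (monom c k) M z = (\<Sum>i\<le>k. coeff (monom c k) i *s ((\<lambda>w. w v* M)^^i) z)"
    by (rule pe_bound) (simp add: degree_monom_le)
  also have "\<dots> = c *s ((\<lambda>w. w v* M)^^k) z"
    by (simp add: coeff_monom if_distrib[of "\<lambda>x. x *s _"] sum.delta cong: if_cong)
  finally show ?thesis .
qed

lemma pe_zero[simp]: "pe 0 M z = 0" by (simp add: pe_def)

lemma pe_sum: "finite A \<Longrightarrow> pe (\<Sum>a\<in>A. f a) M z = (\<Sum>a\<in>A. pe (f a) M z)"
  by (induction A rule: finite_induct) (simp_all add: pe_add)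

lemma pe_lin: "pe ([:-r, 1:] * q) M z = pe q M z v* M - r *s pe q M z"
proof -
  have e: "[:-r, 1:] * q = smult (-r) q + pCons 0 q" by simp
  show ?thesis
    unfolding e pe_add pe_smult pe_pCons0 by (simp add: vec_eq_iff)
qed

lemma pe_in:
  assumes add: "\<And>a b. a\<in>Z \<Longrightarrow> b\<in>Z \<Longrightarrow> a+b\<in>Z" and sc: "\<And>c a. a\<in>Z \<Longrightarrow> c *s a \<in> Z"
    and inv: "\<And>a. a\<in>Z \<Longrightarrow> a v* M \<in> Z" and z: "z \<in> Z"
  shows "pe p M z \<in> Z"
proof -
  have it: "((\<lambda>w. w v* M)^^i) z \<in> Z" for i
    by (induction i) (simp_all add: z inv)
  have z0: "0 \<in> Z" using sc[OF z, of 0] by simp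
  have "finite B \<Longrightarrow> (\<Sum>i\<in>B. coeff p i *s ((\<lambda>w. w v* M)^^i) z) \<in> Z" for B :: "nat set"
    by (induction B rule: finite_induct) (simp_all add: z0 add sc it)
  then show ?thesis unfolding pe_def by simp
qed

lemma eig_from_poly:
  fixes M :: "complex^'x^'x"
  assumes add: "\<And>a b. a\<in>Z \<Longrightarrow> b\<in>Z \<Longrightarrow> a+b\<in>Z" and sc: "\<And>c a. a\<in>Z \<Longrightarrow> c *s a \<in> Z"
    and inv: "\<And>a. a\<in>Z \<Longrightarrow> a v* M \<in> Z"
  shows "p \<noteq> 0 \<Longrightarrow> z \<in> Z \<Longrightarrow> z \<noteq> 0 \<Longrightarrow> pe p M z = 0 \<Longrightarrow> \<exists>w\<in>Z. w \<noteq> 0 \<and> (\<exists>\<theta>. w v* M = \<theta> *s w)"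
proof (induction "degree p" arbitrary: p rule: less_induct)
  case less
  show ?case
  proof (cases "degree p = 0")
    case True
    then obtain c where p: "p = [:c:]" by (metis degree_eq_zeroE)
    with less.prems have "c \<noteq> 0" by simp
    moreover have "pe p M z = c *s z" using p by (simp add: pe_def)
    ultimately show ?thesis using less.prems by simp
  next
    case False
    have "\<exists>r. poly p r = 0"
      by (rule fundamental_theorem_of_algebra_alt) (use False in auto)
    then obtain r where "poly p r = 0" by blast
    then obtain q where pq: "p = [:-r, 1:] * q" by (auto simp: poly_eq_0_iff_dvd elim: dvdE)
    have q0: "q \<noteq> 0" using less.prems pq by auto
    have "degree p = degree [:-r, 1:] + degree q" unfolding pq by (rule degree_mult_eq) (use q0 in auto)
    hence dq: "degree q < degree p" by simp
    let ?w = "pe q M z"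
    have wZ: "?w \<in> Z" by (rule pe_in[OF add sc inv less.prems(2)])
    show ?thesis
    proof (cases "?w = 0")
      case True
      show ?thesis by (rule less.hyps[OF dq q0 less.prems(2,3) True])
    next
      case False
      have "?w v* M - r *s ?w = 0" using less.prems(4) unfolding pq pe_lin .
      hence "?w v* M = r *s ?w" by simp
      with False wZ show ?thesis by blast
    qed
  qed
qed

lemma poly_annih:
  fixes M :: "complex^'x^'x"
  shows "\<exists>p. p \<noteq> 0 \<and> pe p M z = 0"
proof -
  let ?f = "\<lambda>i. ((\<lambda>w. w v* M)^^i) z"
  let ?n = "CARD('x)"
  show ?thesis
  proof (cases "inj_on ?f {..?n}")
    case False
    then obtain i j where ij: "i \<noteq> j" "?f i = ?f j" unfolding inj_on_def by blast
    let ?p = "monom (1::complex) i + monom (-1) j"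
    have "coeff ?p i = 1" using ij by (simp add: coeff_monom)
    hence "?p \<noteq> 0" by (metis coeff_0 zero_neq_one)
    moreover have "pe ?p M z = 0" using ij by (simp add: pe_add pe_monom vec_eq_iff)
    ultimately show ?thesis by blast
  next
    case True
    let ?S = "?f ` {..?n}"
    have cS: "card ?S = Suc ?n" using True by (simp add: card_image)
    have "\<not> vec.independent ?S"
    proof
      assume "vec.independent ?S"
      then have "card ?S \<le> vec.dim (UNIV :: (complex^'x) set)"
        by (rule vec.independent_card_le_dim[OF subset_UNIV])
      with cS card_cart_basis[where ?'a=complex and ?'i='x] show False by simp
    qed
    then obtain c v where cv: "(\<Sum>v\<in>?S. c v *s v) = 0" "v \<in> ?S" "c v \<noteq> 0"
      unfolding vec.independent_explicit by auto
    then obtain i0 where i0: "i0 \<le> ?n" "v = ?f i0" by auto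
    let ?p = "\<Sum>i\<le>?n. monom (c (?f i)) i"
    have "coeff ?p i0 = c (?f i0)" using i0 by (simp add: coeff_sum coeff_monom)
    hence "?p \<noteq> 0" using cv i0 by auto
    moreover have "pe ?p M z = (\<Sum>i\<le>?n. c (?f i) *s ?f i)" by (simp add: pe_sum pe_monom)
    moreover have "\<dots> = (\<Sum>v\<in>?S. c v *s v)"
      by (rule sum.reindex[OF True, unfolded comp_def, symmetric])
    ultimately show ?thesis using cv by auto
  qed
qed

lemma eig_exists:
  fixes M :: "complex^'x^'x"
  assumes add: "\<And>a b. a\<in>Z \<Longrightarrow> b\<in>Z \<Longrightarrow> a+b\<in>Z" and sc: "\<And>c a. a\<in>Z \<Longrightarrow> c *s a \<in> Z"
    and inv: "\<And>a. a\<in>Z \<Longrightarrow> a v* M \<in> Z" and z: "z \<in> Z" "z \<noteq> 0"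
  shows "\<exists>w\<in>Z. w \<noteq> 0 \<and> (\<exists>\<theta>. w v* M = \<theta> *s w)"
  using poly_annih[of M z] eig_from_poly[OF add sc inv _ z] by blast

definition cx :: "real^'n \<Rightarrow> complex^'n" where "cx x = (\<chi> i. complex_of_real (x$i))"
definition pr :: "'a::comm_semiring_1^'n \<Rightarrow> 'a^'n \<Rightarrow> 'a" where "pr z y = (\<Sum>i\<in>UNIV. z$i * y$i)"

lemma cmat_mv: "cmat M *v cx x = cx (M *v x)"
  by (simp add: vec_eq_iff matrix_vector_mult_def cmat_def cx_def)

lemma pr_mv: "pr z (A *v y) = pr (z v* A) y"
proof -
  have "pr z (A *v y) = (\<Sum>i\<in>UNIV. \<Sum>j\<in>UNIV. z$i * A$i$j * y$j)"
    by (simp add: pr_def matrix_vector_mult_def sum_distrib_left mult.assoc)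
  also have "\<dots> = (\<Sum>j\<in>UNIV. \<Sum>i\<in>UNIV. z$i * A$i$j * y$j)"
    by (rule sum.swap)
  also have "\<dots> = pr (z v* A) y"
    by (simp add: pr_def vector_matrix_mult_def sum_distrib_right)
  finally show ?thesis .
qed

lemma pr_add2: "pr z (a + b) = pr z a + pr z b"
  by (simp add: pr_def distrib_left sum.distrib)
lemma pr_add1: "pr (a + b) z = pr a z + pr b z"
  by (simp add: pr_def distrib_right sum.distrib)
lemma pr_smult1: "pr (c *s a) z = c * pr a z"
  by (simp add: pr_def sum_distrib_left mult.assoc)
lemma cx_add: "cx (a + b) = cx a + cx b" by (simp add: cx_def vec_eq_iff)
lemma pr_axis: "pr z (cx (axis i 1)) = z $ i"
proof -
  have "pr z (cx (axis i 1)) = (\<Sum>ia\<in>UNIV. if ia = i then z$ia else 0)"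
    unfolding pr_def by (rule sum.cong) (auto simp: axis_def cx_def)
  then show ?thesis by simp
qed
lemma cx_0[simp]: "cx 0 = 0" by (simp add: cx_def vec_eq_iff)
lemma pr_0[simp]: "pr z 0 = 0" by (simp add: pr_def)

lemma PBH_nec:
  fixes Phi :: "real^'x^'x" and Psi :: "real^'u^'x"
  assumes c: "dt_controllable Phi Psi" and z: "z \<noteq> 0" and e: "z v* cmat Phi = \<theta> *s z"
    and t: "\<theta> \<noteq> 0"
  shows "z v* cmat Psi \<noteq> 0"
proof
  assume p: "z v* cmat Psi = 0"
  have tr: "pr z (cx (dtraj Phi Psi X0 U K)) = \<theta>^K * pr z (cx X0)" for X0 U K
  proof (induction K)
    case 0 then show ?case by simp
  next
    case (Suc K)
    have "pr z (cx (dtraj Phi Psi X0 U (Suc K)))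
        = pr z (cmat Phi *v cx (dtraj Phi Psi X0 U K)) + pr z (cmat Psi *v cx (U K))"
      by (simp add: cx_add pr_add2 cmat_mv)
    also have "\<dots> = \<theta> * pr z (cx (dtraj Phi Psi X0 U K))"
      by (simp add: pr_mv e p pr_smult1) (simp add: pr_def)
    finally show ?case using Suc by simp
  qed
  have "z $ i = 0" for i
  proof -
    obtain K U where "dtraj Phi Psi (axis i 1) U K = 0" using c unfolding dt_controllable_def by blast
    with tr[of "axis i 1" U K] have "\<theta>^K * z $ i = 0" by (simp add: pr_axis)
    with t show ?thesis by simp
  qed
  with z show False by (simp add: vec_eq_iff)
qed

lemma dtraj_split: "dtraj Phi Psi X0 U K = dtraj Phi Psi X0 (\<lambda>_. 0) K + dtraj Phi Psi 0 U K"
  by (induction K) (simp_all add: matrix_vector_right_distrib)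

lemma dtraj_add: "dtraj Phi Psi 0 (\<lambda>j. U1 j + U2 j) K = dtraj Phi Psi 0 U1 K + dtraj Phi Psi 0 U2 K"
  by (induction K) (simp_all add: matrix_vector_right_distrib)

lemma dtraj_scale: "dtraj Phi Psi 0 (\<lambda>j. c *\<^sub>R U j) K = c *\<^sub>R dtraj Phi Psi 0 U K"
  by (induction K) (simp_all add: matrix_vector_right_distrib matrix_vector_mult_scaleR scaleR_add_right)

lemma dtraj_cong: "(\<And>j. j < K \<Longrightarrow> U j = U' j) \<Longrightarrow> dtraj Phi Psi X U K = dtraj Phi Psi X U' K"
  by (induction K) auto

lemma dtraj_shift: "dtraj Phi Psi 0 (\<lambda>j. if j = 0 then 0 else U (j - 1)) (Suc K) = dtraj Phi Psi 0 U K"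
  by (induction K) simp_all

lemma PBH_suff:
  fixes Phi :: "real^'x^'x" and Psi :: "real^'u^'x"
  assumes H: "\<forall>\<theta> z. z \<noteq> 0 \<and> z v* cmat Phi = \<theta> *s z \<longrightarrow> z v* cmat Psi \<noteq> 0"
  shows "dt_controllable Phi Psi"
proof -
  define R where "R K = range (\<lambda>U. dtraj Phi Psi 0 U K)" for K
  have sub: "subspace (R K)" for K
    unfolding subspace_def R_def
  proof (intro conjI ballI allI)
    have e0: "dtraj Phi Psi 0 (\<lambda>_. 0) K = 0" by (induction K) simp_all
    have "dtraj Phi Psi 0 (\<lambda>_. 0) K \<in> range (\<lambda>U. dtraj Phi Psi 0 U K)" by (rule rangeI)
    then show "0 \<in> range (\<lambda>U. dtraj Phi Psi 0 U K)" by (simp only: e0)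
  next
    fix x y assume "x \<in> range (\<lambda>U. dtraj Phi Psi 0 U K)" "y \<in> range (\<lambda>U. dtraj Phi Psi 0 U K)"
    then obtain U1 U2 where "x = dtraj Phi Psi 0 U1 K" "y = dtraj Phi Psi 0 U2 K" by blast
    then have e1: "x + y = dtraj Phi Psi 0 (\<lambda>j. U1 j + U2 j) K" by (simp only: dtraj_add)
    show "x + y \<in> range (\<lambda>U. dtraj Phi Psi 0 U K)" unfolding e1 by (rule rangeI)
  next
    fix c x assume "x \<in> range (\<lambda>U. dtraj Phi Psi 0 U K)"
    then obtain U1 where "x = dtraj Phi Psi 0 U1 K" by blast
    then have e2: "c *\<^sub>R x = dtraj Phi Psi 0 (\<lambda>j. c *\<^sub>R U1 j) K" by (simp only: dtraj_scale)
    show "c *\<^sub>R x \<in> range (\<lambda>U. dtraj Phi Psi 0 U K)" unfolding e2 by (rule rangeI)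
  qed
  have monoS: "R K \<subseteq> R (Suc K)" for K
  proof
    fix x assume "x \<in> R K"
    then obtain U where "x = dtraj Phi Psi 0 U K" unfolding R_def by blast
    then have "x = dtraj Phi Psi 0 (\<lambda>j. if j = 0 then 0 else U (j - 1)) (Suc K)"
      by (simp only: dtraj_shift)
    then show "x \<in> R (Suc K)" unfolding R_def by blast
  qed
  have mono: "K \<le> K' \<Longrightarrow> R K \<subseteq> R K'" for K K'
    using lift_Suc_mono_le[of R, OF monoS] by blast
  have full: "\<exists>K. R K = UNIV"
  proof (rule ccontr)
    assume nf: "\<not> (\<exists>K. R K = UNIV)"
    define Ru where "Ru = (\<Union>K. R K)"
    have Rusub: "subspace Ru"
      unfolding subspace_def Ru_def
    proof (intro conjI ballI allI)
      show "0 \<in> \<Union> (range R)" using subspace_0[OF sub[of 0]] by blast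
    next
      fix x y assume "x \<in> \<Union> (range R)" "y \<in> \<Union> (range R)"
      then obtain K1 K2 where k: "x \<in> R K1" "y \<in> R K2" by blast
      have "R K1 \<subseteq> R (max K1 K2)" "R K2 \<subseteq> R (max K1 K2)" by (simp_all add: mono)
      with k have "x \<in> R (max K1 K2)" "y \<in> R (max K1 K2)" by auto
      then have "x + y \<in> R (max K1 K2)" by (rule subspace_add[OF sub])
      then show "x + y \<in> \<Union> (range R)" by blast
    next
      fix c x assume "x \<in> \<Union> (range R)"
      then obtain K1 where "x \<in> R K1" by blast
      then have "c *\<^sub>R x \<in> R K1" by (rule subspace_scale[OF sub])
      then show "c *\<^sub>R x \<in> \<Union> (range R)" by blast
    qed
    have RuU: "Ru \<noteq> UNIV"
    proof
      assume U: "Ru = UNIV"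
      have "\<forall>i. \<exists>K. axis i 1 \<in> R K" using U unfolding Ru_def by blast
      from choice[OF this] obtain Kf where Kf: "\<forall>i. axis i 1 \<in> R (Kf i)" by blast
      define K0 where "K0 = Max (range Kf)"
      have ax: "axis i 1 \<in> R K0" for i
      proof -
        have "Kf i \<le> K0" unfolding K0_def by (rule Max_ge) auto
        then have "R (Kf i) \<subseteq> R K0" by (rule mono)
        with Kf show ?thesis by blast
      qed
      have "x \<in> R K0" for x
      proof -
        have "(\<Sum>i\<in>UNIV. x$i *\<^sub>R axis i 1) \<in> R K0"
          by (rule subspace_sum[OF sub]) (rule subspace_scale[OF sub ax])
        moreover have "(\<Sum>i\<in>UNIV. x$i *\<^sub>R axis i 1) = x"
          using basis_expansion[of x] by (simp only: scalar_mult_eq_scaleR)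
        ultimately show ?thesis by simp
      qed
      with nf show False by blast
    qed
    have sRu: "span Ru = Ru" using Rusub by simp
    have "span Ru \<noteq> span UNIV" using RuU by (simp add: sRu span_UNIV)
    moreover have "span Ru \<subseteq> span UNIV" by (rule span_mono) simp
    ultimately have "span Ru \<subset> span UNIV" by blast
    then obtain y :: "real^'x" where y: "y \<noteq> 0" "y \<in> span UNIV" "\<And>r. r \<in> span Ru \<Longrightarrow> orthogonal y r"
      by (rule orthogonal_to_subspace_exists_gen) blast+
    define Z where "Z = {z. \<forall>r\<in>Ru. pr z (cx r) = 0}"
    have yZ: "cx y \<in> Z"
    proof -
      have "pr (cx y) (cx r) = complex_of_real (y \<bullet> r)" for r
        by (simp add: pr_def cx_def inner_vec_def)
      moreover have "y \<bullet> r = 0" if "r \<in> Ru" for r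
        using y(3)[OF span_base[OF that]] unfolding orthogonal_def .
      ultimately show ?thesis unfolding Z_def by simp
    qed
    have y0: "cx y \<noteq> 0" using y(1) by (simp add: cx_def vec_eq_iff)
    have PhiR: "Phi *v r \<in> Ru" if "r \<in> Ru" for r
    proof -
      from that obtain K U where r: "r = dtraj Phi Psi 0 U K" unfolding Ru_def R_def by blast
      have "dtraj Phi Psi 0 (U(K := 0)) K = dtraj Phi Psi 0 U K" by (rule dtraj_cong) simp
      then have "Phi *v r = dtraj Phi Psi 0 (U(K := 0)) (Suc K)" by (simp add: r)
      then show ?thesis unfolding Ru_def R_def by blast
    qed
    have PsiR: "Psi *v u \<in> Ru" for u
    proof -
      have "Psi *v u = dtraj Phi Psi 0 (\<lambda>_. u) (Suc 0)" by simp
      then show ?thesis unfolding Ru_def R_def by blast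
    qed
    have "\<exists>w\<in>Z. w \<noteq> 0 \<and> (\<exists>\<theta>. w v* cmat Phi = \<theta> *s w)"
    proof (rule eig_exists[OF _ _ _ yZ y0])
      show "a + b \<in> Z" if "a \<in> Z" "b \<in> Z" for a b using that by (simp add: Z_def pr_add1)
      show "c *s a \<in> Z" if "a \<in> Z" for a c using that by (simp add: Z_def pr_smult1)
      show "a v* cmat Phi \<in> Z" if "a \<in> Z" for a
        using that PhiR by (simp add: Z_def pr_mv[symmetric] cmat_mv)
    qed
    then obtain w \<theta> where w: "w \<in> Z" "w \<noteq> 0" "w v* cmat Phi = \<theta> *s w" by blast
    have "(w v* cmat Psi) $ j = 0" for j
    proof -
      have "(w v* cmat Psi) $ j = pr (w v* cmat Psi) (cx (axis j 1))" by (simp add: pr_axis)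
      also have "\<dots> = pr w (cx (Psi *v axis j 1))" by (simp add: pr_mv[symmetric] cmat_mv)
      also have "\<dots> = 0" using w(1) PsiR unfolding Z_def by blast
      finally show ?thesis .
    qed
    then have "w v* cmat Psi = 0" by (simp add: vec_eq_iff)
    with H w show False by blast
  qed
  then obtain K where K: "R K = UNIV" by blast
  show ?thesis unfolding dt_controllable_def
  proof
    fix X0
    have "- dtraj Phi Psi X0 (\<lambda>_. 0) K \<in> R K" using K by simp
    then obtain U where "dtraj Phi Psi 0 U K = - dtraj Phi Psi X0 (\<lambda>_. 0) K" unfolding R_def by auto
    then have "dtraj Phi Psi X0 U K = 0" by (subst dtraj_split) simp
    then show "\<exists>K U. dtraj Phi Psi X0 U K = 0" by blast
  qed
qed

lemma sum_prod_UNIV: "(\<Sum>i\<in>(UNIV::('a::finite\<times>'b::finite) set). f i) = (\<Sum>a\<in>UNIV. \<Sum>b\<in>UNIV. f (a,b))"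
  by (simp add: sum.cartesian_product)

lemma kron_vm: "kronv x y v* kron P Q = kronv (x v* P) ((y::'a::comm_semiring_1^'k) v* Q)"
proof -
  have "(kronv x y v* kron P Q) $ (j1, j2) = (kronv (x v* P) (y v* Q)) $ (j1, j2)" for j1 j2
    by (simp add: kronv_def kron_def vector_matrix_mult_def sum_prod_UNIV sum_product
        algebra_simps)
  then show ?thesis by (simp add: vec_eq_iff)
qed

lemma kronv_add2: "kronv x (a + b) = kronv x a + kronv x (b::'a::comm_semiring_1^'k)"
  by (simp add: vec_eq_iff kronv_def distrib_left)
lemma kronv_smult2: "kronv x (c *s b) = c *s kronv x (b::'a::comm_semiring_1^'k)"
  by (simp add: vec_eq_iff kronv_def algebra_simps)
lemma kronv_smult1: "kronv (c *s x) b = c *s kronv x (b::'a::comm_semiring_1^'k)"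
  by (simp add: vec_eq_iff kronv_def algebra_simps)
lemma kronv_0[simp]: "kronv x (0::'a::comm_semiring_1^'k) = 0" "kronv 0 (b::'a::comm_semiring_1^'k) = 0"
  by (simp_all add: vec_eq_iff kronv_def)
lemma kronv_eq_0: "kronv x (y::'a::{comm_semiring_1,semiring_no_zero_divisors}^'k) = 0 \<longleftrightarrow> x = 0 \<or> y = 0"
proof
  assume h: "kronv x y = 0"
  show "x = 0 \<or> y = 0"
  proof (rule ccontr)
    assume "\<not> (x = 0 \<or> y = 0)"
    then obtain i j where "x $ i \<noteq> 0" "y $ j \<noteq> 0" by (auto simp: vec_eq_iff)
    moreover have "kronv x y $ (i, j) = 0" using h by simp
    ultimately show False by (simp add: kronv_def)
  qed
qed auto

lemma cmat_add: "cmat (A + B) = cmat A + cmat B" by (simp add: cmat_def vec_eq_iff)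
lemma cmat_kron: "cmat (kron P Q) = kron (cmat P) (cmat Q)" by (simp add: cmat_def kron_def vec_eq_iff)
lemma cmat_1: "cmat (mat 1) = mat 1" by (simp add: cmat_def mat_def vec_eq_iff)
lemma vm_mat: "x v* mat c = c *s (x::'a::comm_semiring_1^'n)"
  by (simp add: vec_eq_iff vector_matrix_mult_def mat_def mult_delta_right sum.delta mult.commute cong: if_cong)
lemma vm_mat_mult: "x v* (mat c ** M) = c *s (x v* (M::'a::comm_semiring_1^'m^'n))"
  by (simp add: vector_matrix_mul_assoc[symmetric] vm_mat vm_smult)

lemma vm_blk:
  fixes X :: "'a::comm_semiring_1^'q^'r" and Y :: "'a^'s^'r"
  shows "w v* ((\<chi> i j. case j of Inl a \<Rightarrow> X $ i $ a | Inr b \<Rightarrow> Y $ i $ b) :: 'a^('q + 's)^'r) = 0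
     \<longleftrightarrow> w v* X = 0 \<and> w v* Y = 0" (is "?L = ?R")
proof -
  have c: "(w v* ((\<chi> i j. case j of Inl a \<Rightarrow> X $ i $ a | Inr b \<Rightarrow> Y $ i $ b) :: 'a^('q + 's)^'r)) $ j
     = (case j of Inl a \<Rightarrow> (w v* X) $ a | Inr b \<Rightarrow> (w v* Y) $ b)" for j
    by (cases j) (simp_all add: vector_matrix_mult_def)
  show ?thesis
  proof
    assume L: ?L
    have "(w v* X) $ a = 0" for a using c[of "Inl a"] by (simp add: L)
    moreover have "(w v* Y) $ b = 0" for b using c[of "Inr b"] by (simp add: L)
    ultimately show ?R by (simp add: vec_eq_iff)
  next
    assume ?R
    then show ?L by (simp add: vec_eq_iff c split: sum.split)
  qed
qed

lemma pair_controllable_iff: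
  "pair_controllable F G \<longleftrightarrow> (\<forall>s w. w v* F = s *s w \<and> w v* G = 0 \<longrightarrow> w = 0)"
proof -
  have "w v* (mat s - F) = 0 \<longleftrightarrow> w v* F = s *s w" for w s
    by (auto simp add: vector_matrix_mult_diff_rdistrib vm_mat)
  then show ?thesis
    unfolding pair_controllable_def rank_full_iff vm_blk by auto
qed

lemma det_left_null:
  fixes M :: "'a::field^'n^'n"
  assumes "det M \<noteq> 0" "x v* M = 0" shows "x = 0"
proof -
  obtain B where "M ** B = mat 1" using assms(1) invertible_det_nz[of M] invertible_right_inverse by blast
  then have "x = (x v* M) v* B" by (simp add: vector_matrix_mul_assoc)
  with assms(2) show ?thesis by simp
qed

definition Gs :: "('N::finite \<Rightarrow> complex^'N) \<Rightarrow> ('N \<Rightarrow> complex^'n) \<Rightarrow> complex^('N \<times> 'n)" where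
  "Gs v \<xi> = (\<Sum>k\<in>UNIV. kronv (v k) (\<xi> k))"

lemma Gs_comp: "Gs v \<xi> $ (a, i) = (\<Sum>k\<in>UNIV. v k $ a * \<xi> k $ i)"
  by (simp add: Gs_def sum_component kronv_def)

lemma Gs_diff: "Gs v \<xi>1 - Gs v \<xi>2 = Gs v (\<lambda>k. \<xi>1 k - \<xi>2 k)"
  by (simp add: vec_eq_iff Gs_comp sum_subtractf right_diff_distrib split_paired_All)

lemma Gs_smult: "c *s Gs v \<xi> = Gs v (\<lambda>k. c *s \<xi> k)"
  by (simp add: vec_eq_iff Gs_comp sum_distrib_left mult.left_commute split_paired_All)

lemma Gs_inj0:
  assumes vi: "\<forall>c :: 'N::finite \<Rightarrow> complex. (\<Sum>k\<in>UNIV. c k *s v k) = 0 \<longrightarrow> (\<forall>k. c k = 0)"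
    and g: "Gs v \<xi> = 0"
  shows "\<xi> k = 0"
proof -
  have "\<xi> k $ i = 0" for i
  proof -
    have "(\<Sum>k\<in>UNIV. (\<xi> k $ i) *s v k) = 0"
    proof (subst vec_eq_iff, intro allI)
      fix a
      have "(\<Sum>k\<in>UNIV. (\<xi> k $ i) *s v k) $ a = Gs v \<xi> $ (a,i)"
        by (simp add: Gs_comp sum_component mult.commute)
      then show "(\<Sum>k\<in>UNIV. (\<xi> k $ i) *s v k) $ a = 0 $ a" using g by simp
    qed
    from vi[rule_format, OF this] show ?thesis by simp
  qed
  then show ?thesis by (simp add: vec_eq_iff)
qed

lemma Gs_inj:
  assumes vi: "\<forall>c :: 'N::finite \<Rightarrow> complex. (\<Sum>k\<in>UNIV. c k *s v k) = 0 \<longrightarrow> (\<forall>k. c k = 0)"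
    and g: "Gs v \<xi>1 = Gs v \<xi>2"
  shows "\<xi>1 k = \<xi>2 k"
proof -
  have "Gs v (\<lambda>k. \<xi>1 k - \<xi>2 k) = 0" using g Gs_diff[of v \<xi>1 \<xi>2] by simp
  from Gs_inj0[OF vi this] show ?thesis by simp
qed

lemma Gs_surj:
  fixes v :: "'N::finite \<Rightarrow> complex^'N"
  assumes vi: "\<forall>c :: 'N \<Rightarrow> complex. (\<Sum>k\<in>UNIV. c k *s v k) = 0 \<longrightarrow> (\<forall>k. c k = 0)"
  shows "\<exists>\<xi>::'N \<Rightarrow> complex^'n. z = Gs v \<xi>"
proof -
  define Mt :: "complex^('N\<times>'n)^('N\<times>'n)"
    where "Mt = (\<chi> r c. v (fst c) $ fst r * (if snd r = snd c then 1 else 0))"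
  define tox :: "complex^('N\<times>'n) \<Rightarrow> 'N \<Rightarrow> complex^'n" where "tox X = (\<lambda>k. \<chi> i. X $ (k,i))" for X
  have MG: "Mt *v X = Gs v (tox X)" for X
  proof -
    have "(Mt *v X) $ (a,i) = Gs v (tox X) $ (a,i)" for a i
    proof -
      have "(Mt *v X) $ (a,i) = (\<Sum>k\<in>UNIV. \<Sum>j\<in>UNIV. v k $ a * (if i = j then 1 else 0) * X $ (k,j))"
        by (simp add: Mt_def matrix_vector_mult_def sum_prod_UNIV)
      also have "\<dots> = (\<Sum>k\<in>UNIV. v k $ a * X $ (k,i))"
        by (rule sum.cong) (simp_all add: if_distrib[of "\<lambda>x. _ * x"] if_distrib[of "\<lambda>x. x * _"] sum.delta cong: if_cong)
      also have "\<dots> = Gs v (tox X) $ (a,i)" by (simp add: Gs_comp tox_def)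
      finally show ?thesis .
    qed
    then show ?thesis by (simp add: vec_eq_iff split_paired_All)
  qed
  have inj: "inj ((*v) Mt)"
  proof (rule injI)
    fix X Y assume "Mt *v X = Mt *v Y"
    then have "Gs v (tox X) = Gs v (tox Y)" by (simp add: MG)
    then have "tox X k = tox Y k" for k by (rule Gs_inj[OF vi])
    then have "X $ (k,i) = Y $ (k,i)" for k i unfolding tox_def by (metis vec_lambda_beta)
    then show "X = Y" by (simp add: vec_eq_iff split_paired_All)
  qed
  have "surj ((*v) Mt)"
    by (rule vec.linear_injective_imp_surjective[OF matrix_vector_mul_linear_gen inj]) simp
  then obtain X where "z = Mt *v X" by (metis surjD)
  then show ?thesis using MG by blast
qed

theorem corollary1:
  fixes A :: "real^'n^'n" and B :: "real^'p^'n" and C :: "real^'n^'m" and H :: "real^'m^'n"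
    and W :: "real^'N^'N" and \<delta> :: "'N \<Rightarrow> real" and h :: real
    and v :: "'N \<Rightarrow> complex^'N" and lam :: "'N \<Rightarrow> complex"
  defines "Dlt \<equiv> (\<chi> i j. if i = j then \<delta> i else 0) :: real^'N^'N"
  defines "Bh \<equiv> integral {0..h} (\<lambda>\<tau>. mexp (\<tau> *\<^sub>R A)) ** B"
  defines "Hh \<equiv> integral {0..h} (\<lambda>\<tau>. mexp (\<tau> *\<^sub>R A)) ** (H ** C)"
  defines "Phis \<equiv> kron (mat 1 :: real^'N^'N) (mexp (h *\<^sub>R A)) + kron W Hh"
  defines "Psis \<equiv> kron Dlt Bh"
  defines "E \<equiv> (\<lambda>k. cmat (mexp (h *\<^sub>R A)) + mat (lam k) ** cmat Hh)"
  assumes hpos: "h > 0"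
    and Wdiag0: "\<forall>i. W $ i $ i = 0"
    and delta01: "\<forall>i. \<delta> i \<in> {0, 1}"
    and v_indep: "\<forall>c :: 'N \<Rightarrow> complex. (\<Sum>k\<in>UNIV. c k *s v k) = 0 \<longrightarrow> (\<forall>k. c k = 0)"
    and v_eig: "\<forall>k. v k v* cmat W = lam k *s v k"
    and E_nonsing: "\<forall>k. det (E k) \<noteq> 0"
  shows "dt_controllable Phis Psis \<longleftrightarrow>
     pair_controllable (cmat W) (cmat Dlt)
     \<and> (\<forall>k. pair_controllable (E k) (cmat Bh))
     \<and> (\<forall>(S :: 'N set) (\<theta> :: complex). 1 < card S \<and>
            (\<forall>k\<in>S. \<exists>\<eta>. \<eta> \<noteq> 0 \<and> \<eta> \<in> left_eigenspace \<theta> (E k)) \<longrightarrow>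
            (\<forall>\<xi> :: 'N \<Rightarrow> complex^'n.
               (\<forall>k\<in>S. \<xi> k \<in> left_eigenspace \<theta> (E k)) \<and> (\<exists>k\<in>S. \<xi> k \<noteq> 0) \<longrightarrow>
               (\<Sum>k\<in>S. kronv (v k) (\<xi> k)) v* kron (cmat Dlt) (cmat Bh) \<noteq> 0))"
proof -
  let ?e = "cmat (mexp (h *\<^sub>R A))"
  let ?cH = "cmat Hh" and ?cB = "cmat Bh" and ?cD = "cmat Dlt" and ?cW = "cmat W"
  have cPhi: "cmat Phis = kron (mat 1) ?e + kron ?cW ?cH"
    unfolding Phis_def by (simp add: cmat_add cmat_kron cmat_1)
  have cPsi: "cmat Psis = kron ?cD ?cB" unfolding Psis_def by (rule cmat_kron)
  have eigW: "kronv w \<xi> v* cmat Phis = kronv w (\<xi> v* (?e + mat s ** ?cH))"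
    if "w v* ?cW = s *s w" for w \<xi> s
    using that by (simp add: cPhi vector_matrix_mult_add_rdistrib kron_vm vm_mat vm_mat_mult
        kronv_smult1 kronv_smult2 kronv_add2)
  have Ek: "E k = ?e + mat (lam k) ** ?cH" for k by (simp add: E_def)
  have eigV: "kronv (v k) \<xi> v* cmat Phis = kronv (v k) (\<xi> v* E k)" for k \<xi>
    using eigW[OF v_eig[rule_format, of k]] Ek by simp
  have psiK: "kronv w \<xi> v* cmat Psis = kronv (w v* ?cD) (\<xi> v* ?cB)" for w \<xi>
    by (simp add: cPsi kron_vm)
  have GPhi: "Gs v \<xi> v* cmat Phis = Gs v (\<lambda>k. \<xi> k v* E k)" for \<xi>
    by (simp add: Gs_def vm_sum eigV)
  have vne: "v k \<noteq> 0" for k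
  proof
    assume v0: "v k = 0"
    have "(\<Sum>j\<in>UNIV. (if j = k then 1 else 0) *s v j) = v k"
      by (simp add: if_distrib[of "\<lambda>c. c *s _"] cong: if_cong)
    with v0 have "(\<Sum>j\<in>UNIV. (if j = k then (1::complex) else 0) *s v j) = 0" by simp
    from v_indep[rule_format, OF this, of k] show False by simp
  qed
  have G0: "Gs v \<xi> = 0 \<longleftrightarrow> (\<forall>k. \<xi> k = 0)" for \<xi>
    using Gs_inj0[OF v_indep] by (auto simp: Gs_def)
  have Geig: "Gs v \<xi> v* cmat Phis = \<theta> *s Gs v \<xi> \<longleftrightarrow> (\<forall>k. \<xi> k v* E k = \<theta> *s \<xi> k)" for \<xi> \<theta>
  proof
    assume "Gs v \<xi> v* cmat Phis = \<theta> *s Gs v \<xi>"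
    then have "Gs v (\<lambda>k. \<xi> k v* E k) = Gs v (\<lambda>k. \<theta> *s \<xi> k)" by (simp add: GPhi Gs_smult)
    then show "\<forall>k. \<xi> k v* E k = \<theta> *s \<xi> k" using Gs_inj[OF v_indep] by blast
  next
    assume "\<forall>k. \<xi> k v* E k = \<theta> *s \<xi> k"
    then show "Gs v \<xi> v* cmat Phis = \<theta> *s Gs v \<xi>" by (simp add: GPhi Gs_smult)
  qed
  have surj: "\<exists>\<xi>. z = Gs v \<xi>" for z :: "complex^('N \<times> 'n)"
    by (rule Gs_surj[OF v_indep])
  define P where "P \<longleftrightarrow> (\<forall>\<theta> z. z \<noteq> 0 \<and> z v* cmat Phis = \<theta> *s z \<longrightarrow> z v* cmat Psis \<noteq> 0)"
  have noz: "z = 0" if "z v* cmat Phis = 0 *s z" for z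
  proof -
    obtain \<xi> where z: "z = Gs v \<xi>" using surj by blast
    with that have "\<forall>k. \<xi> k v* E k = 0 *s \<xi> k" using Geig by blast
    then have "\<xi> k = 0" for k using det_left_null[OF E_nonsing[rule_format, of k]] by simp
    then show ?thesis using z G0 by blast
  qed
  have ctrl: "dt_controllable Phis Psis \<longleftrightarrow> P"
  proof
    assume c: "dt_controllable Phis Psis"
    show P unfolding P_def
    proof (intro allI impI)
      fix \<theta> z assume h: "z \<noteq> 0 \<and> z v* cmat Phis = \<theta> *s z"
      show "z v* cmat Psis \<noteq> 0"
      proof (cases "\<theta> = 0")
        case True then show ?thesis using h noz by blast
      next
        case False then show ?thesis using PBH_nec[OF c _ _ False] h by blast
      qed
    qed
  next
    assume P then show "dt_controllable Phis Psis" unfolding P_def by (rule PBH_suff)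
  qed
  have c1: "pair_controllable ?cW ?cD" if P
    unfolding pair_controllable_iff
  proof (intro allI impI)
    fix s w assume sw: "w v* ?cW = s *s w \<and> w v* ?cD = 0"
    show "w = 0"
    proof (rule ccontr)
      assume w0: "w \<noteq> 0"
      obtain \<xi> \<theta> where xi: "\<xi> \<noteq> 0" "\<xi> v* (?e + mat s ** ?cH) = \<theta> *s \<xi>"
        using eig_exists[of UNIV "?e + mat s ** ?cH" "axis undefined 1"] by (auto simp: axis_eq_0_iff)
      let ?z = "kronv w \<xi>"
      have "?z \<noteq> 0" using w0 xi by (simp add: kronv_eq_0)
      moreover have "?z v* cmat Phis = \<theta> *s ?z" using eigW[of w s] sw xi by (simp add: kronv_smult2)
      moreover have "?z v* cmat Psis = 0" using psiK sw by simp
      ultimately show False using that unfolding P_def by blast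
    qed
  qed
  have c2: "pair_controllable (E k) ?cB" if P for k
    unfolding pair_controllable_iff
  proof (intro allI impI)
    fix s \<xi> assume sx: "\<xi> v* E k = s *s \<xi> \<and> \<xi> v* ?cB = 0"
    show "\<xi> = 0"
    proof (rule ccontr)
      assume x0: "\<xi> \<noteq> 0"
      let ?z = "kronv (v k) \<xi>"
      have "?z \<noteq> 0" using x0 vne by (simp add: kronv_eq_0)
      moreover have "?z v* cmat Phis = s *s ?z" using eigV sx by (simp add: kronv_smult2)
      moreover have "?z v* cmat Psis = 0" using psiK sx by simp
      ultimately show False using that unfolding P_def by blast
    qed
  qed
  have c3: "\<forall>(S :: 'N set) (\<theta> :: complex). 1 < card S \<and>
            (\<forall>k\<in>S. \<exists>\<eta>. \<eta> \<noteq> 0 \<and> \<eta> \<in> left_eigenspace \<theta> (E k)) \<longrightarrow>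
            (\<forall>\<xi> :: 'N \<Rightarrow> complex^'n.
               (\<forall>k\<in>S. \<xi> k \<in> left_eigenspace \<theta> (E k)) \<and> (\<exists>k\<in>S. \<xi> k \<noteq> 0) \<longrightarrow>
               (\<Sum>k\<in>S. kronv (v k) (\<xi> k)) v* kron (cmat Dlt) (cmat Bh) \<noteq> 0)" if P
  proof (intro allI impI)
    fix S :: "'N set" and \<theta> :: complex and \<xi> :: "'N \<Rightarrow> complex^'n"
    assume hx: "(\<forall>k\<in>S. \<xi> k \<in> left_eigenspace \<theta> (E k)) \<and> (\<exists>k\<in>S. \<xi> k \<noteq> 0)"
    define \<xi>' where "\<xi>' k = (if k \<in> S then \<xi> k else 0)" for k
    have sumS: "(\<Sum>k\<in>S. kronv (v k) (\<xi> k)) = Gs v \<xi>'"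
      unfolding Gs_def by (rule sum.mono_neutral_cong_left) (auto simp: \<xi>'_def)
    have "Gs v \<xi>' \<noteq> 0"
    proof
      assume "Gs v \<xi>' = 0"
      then have a0: "\<forall>k. \<xi>' k = 0" by (simp add: G0)
      obtain k where kk: "k \<in> S" "\<xi> k \<noteq> 0" using hx by blast
      have "\<xi>' k = \<xi> k" using kk(1) by (simp add: \<xi>'_def)
      with a0 kk(2) show False by simp
    qed
    moreover have "Gs v \<xi>' v* cmat Phis = \<theta> *s Gs v \<xi>'"
      unfolding Geig using hx by (auto simp: \<xi>'_def left_eigenspace_def)
    ultimately have "Gs v \<xi>' v* cmat Psis \<noteq> 0" using that unfolding P_def by blast
    then show "(\<Sum>k\<in>S. kronv (v k) (\<xi> k)) v* kron (cmat Dlt) (cmat Bh) \<noteq> 0"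
      by (simp add: sumS cPsi)
  qed
  have bk: P if h1: "pair_controllable ?cW ?cD" and h2: "\<forall>k. pair_controllable (E k) ?cB"
    and h3: "\<forall>(S :: 'N set) (\<theta> :: complex). 1 < card S \<and>
            (\<forall>k\<in>S. \<exists>\<eta>. \<eta> \<noteq> 0 \<and> \<eta> \<in> left_eigenspace \<theta> (E k)) \<longrightarrow>
            (\<forall>\<xi> :: 'N \<Rightarrow> complex^'n.
               (\<forall>k\<in>S. \<xi> k \<in> left_eigenspace \<theta> (E k)) \<and> (\<exists>k\<in>S. \<xi> k \<noteq> 0) \<longrightarrow>
               (\<Sum>k\<in>S. kronv (v k) (\<xi> k)) v* kron (cmat Dlt) (cmat Bh) \<noteq> 0)"
    unfolding P_def
  proof (intro allI impI)
    fix \<theta> z assume hz: "z \<noteq> 0 \<and> z v* cmat Phis = \<theta> *s z"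
    obtain \<xi> where z: "z = Gs v \<xi>" using surj by blast
    have eig: "\<forall>k. \<xi> k v* E k = \<theta> *s \<xi> k" using hz z Geig by blast
    define S where "S = {k. \<xi> k \<noteq> 0}"
    have sumS: "(\<Sum>k\<in>S. kronv (v k) (\<xi> k)) = Gs v \<xi>"
      unfolding Gs_def by (rule sum.mono_neutral_left) (auto simp: S_def)
    have Sne: "S \<noteq> {}" using hz z G0 by (auto simp: S_def)
    show "z v* cmat Psis \<noteq> 0"
    proof (cases "1 < card S")
      case True
      have "\<forall>k\<in>S. \<exists>\<eta>. \<eta> \<noteq> 0 \<and> \<eta> \<in> left_eigenspace \<theta> (E k)"
        using eig by (auto simp: S_def left_eigenspace_def)
      moreover have "(\<forall>k\<in>S. \<xi> k \<in> left_eigenspace \<theta> (E k)) \<and> (\<exists>k\<in>S. \<xi> k \<noteq> 0)"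
        using eig Sne by (auto simp: S_def left_eigenspace_def)
      ultimately have "(\<Sum>k\<in>S. kronv (v k) (\<xi> k)) v* kron (cmat Dlt) (cmat Bh) \<noteq> 0"
        using h3 True by blast
      then show ?thesis by (simp add: sumS z cPsi)
    next
      case False
      have "finite S" by simp
      then have "0 < card S" using Sne by (simp add: card_gt_0_iff)
      with False have "card S = 1" by linarith
      then obtain k where Sk: "S = {k}" by (rule card_1_singletonE)
      have zk: "z = kronv (v k) (\<xi> k)" using sumS z Sk by simp
      have xk: "\<xi> k \<noteq> 0" using Sk by (auto simp: S_def)
      have "v k v* ?cD \<noteq> 0"
        using h1 vne v_eig unfolding pair_controllable_iff by blast
      moreover have "\<xi> k v* ?cB \<noteq> 0"
        using h2 xk eig unfolding pair_controllable_iff by blast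
      ultimately show ?thesis by (simp add: zk psiK kronv_eq_0)
    qed
  qed
  show ?thesis
    using ctrl c1 c2 c3 bk by blast
qed

end
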